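(* Let $w\in\Sigma^*$ and let $u$ be a scattered factor of $w$. Then $C(w,u)=\{u\}$ if and only if $w$ is the perfect shuffle of $u$ with itself, i.e., $w=u[1]u[1]u[2]u[2]\cdots u[|u|]u[|u|]$.
   Context: An embedding of $u$ in $w$ is a map $e:\{1,\dots,|u|\}\to\{1,\dots,|w|\}$ with $e(1)<\dots<e(|u|)$ and $u[i]=w[e(i)]$. The shuffle $\mathrm{Sh}(u,v)$ is the set of words of length $|u|+|v|$ admitting an embedding of $u$ and one of $v$ with disjoint images covering all positions, and $C(w,u)=\{v\in\Sigma^{|w|-|u|}: w\in\mathrm{Sh}(u,v)\}$. For words $u,v$ of equal length $m$, the perfect shuffle is $u[1]v[1]u[2]v[2]\cdots u[m]v[m]$. *)

theory Defs
  imports Main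
begin

(* Words are lists; positions are 0-based (position i here = position i+1 in the paper). *)

definition embedding :: "'a list \<Rightarrow> 'a list \<Rightarrow> (nat \<Rightarrow> nat) \<Rightarrow> bool" where
  "embedding u w e \<longleftrightarrow>
     (\<forall>i < length u. e i < length w \<and> u ! i = w ! (e i)) \<and>
     (\<forall>i j. i < j \<and> j < length u \<longrightarrow> e i < e j)"

definition scattered_factor :: "'a list \<Rightarrow> 'a list \<Rightarrow> bool" where
  "scattered_factor u w \<longleftrightarrow> (\<exists>e. embedding u w e)"

definition shuffle :: "'a list \<Rightarrow> 'a list \<Rightarrow> 'a list set" where
  "shuffle u v = {w. length w = length u + length v \<and>
     (\<exists>e f. embedding u w e \<and> embedding v w f \<and>
            e ` {..<length u} \<inter> f ` {..<length v} = {} \<and>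
            e ` {..<length u} \<union> f ` {..<length v} = {..<length w})}"

definition compl_set :: "'a list \<Rightarrow> 'a list \<Rightarrow> 'a list set" where
  "compl_set w u = {v. length v = length w - length u \<and> w \<in> shuffle u v}"

definition perfect_shuffle :: "'a list \<Rightarrow> 'a list \<Rightarrow> 'a list" where
  "perfect_shuffle u v = concat (map (\<lambda>(a, b). [a, b]) (zip u v))"

end

theory Submission
  imports Defs "HOL-Library.Sublist"
begin


lemma shuffles_subseq2: "w \<in> shuffles u v \<Longrightarrow> subseq v w"
proof (induction w arbitrary: u v)
  case Nil then show ?case by simp
next
  case (Cons c w)
  then show ?case
  proof -
    from Cons.prems have "(u \<noteq> [] \<and> hd u = c \<and> w \<in> shuffles (tl u) v) \<or> (v \<noteq> [] \<and> hd v = c \<and> w \<in> shuffles u (tl v))"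
      by (simp add: Cons_in_shuffles_iff)
    then show ?thesis
    proof
      assume "u \<noteq> [] \<and> hd u = c \<and> w \<in> shuffles (tl u) v"
      then show ?thesis using Cons.IH by (meson list_emb_Cons)
    next
      assume h: "v \<noteq> [] \<and> hd v = c \<and> w \<in> shuffles u (tl v)"
      then have "subseq (tl v) w" using Cons.IH by blast
      then have "subseq (hd v # tl v) (c # w)" using h by (metis list_emb_Cons2)
      then show ?thesis using h by (metis list.collapse)
    qed
  qed
qed

lemma subseq_shuffles: "subseq u w \<Longrightarrow> \<exists>v. w \<in> shuffles u v"
proof (induction rule: list_emb.induct)
  case (list_emb_Nil ys) then show ?case by (intro exI[of _ ys]) simp
next
  case (list_emb_Cons xs ys y)
  then obtain v where "ys \<in> shuffles xs v" by blast
  then show ?case by (intro exI[of _ "y # v"]) (simp add: Cons_in_shuffles_rightI)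
next
  case (list_emb_Cons2 x y xs ys)
  then obtain v where "ys \<in> shuffles xs v" by blast
  then show ?case using list_emb_Cons2 by (intro exI[of _ v]) (simp add: Cons_in_shuffles_leftI)
qed

lemma ps_Cons: "perfect_shuffle (a # u) (b # v) = a # b # perfect_shuffle u v"
  by (simp add: perfect_shuffle_def)

lemma ps_in_shuffles: "perfect_shuffle u u \<in> shuffles u u"
proof (induction u)
  case Nil then show ?case by (simp add: perfect_shuffle_def)
next
  case (Cons a u)
  then show ?case by (simp add: ps_Cons Cons_in_shuffles_leftI Cons_in_shuffles_rightI)
qed

lemma fwd: "(\<forall>v. w \<in> shuffles u v \<longleftrightarrow> v = u) \<Longrightarrow> w = perfect_shuffle u u"
proof (induction u arbitrary: w)
  case Nil
  then have "w \<in> shuffles [] []" by blast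
  then show ?case by (simp add: perfect_shuffle_def)
next
  case (Cons a u')
  have w: "w \<in> shuffles (a#u') (a#u')" using Cons.prems by blast
  then have "w \<noteq> []" by auto
  then obtain c w1 where wc: "w = c # w1" by (cases w) auto
  with w have ca: "c = a" and w1: "w1 \<in> shuffles u' (a#u')"
    by (auto simp: Cons_in_shuffles_iff shuffles_commutes)
  have "length w1 = 2 * length u' + 1" using length_shuffles[OF w1] by simp
  then obtain c2 w2 where w1c: "w1 = c2 # w2" by (cases w1) auto
  have sub: "subseq u' w2"
  proof -
    from w1 w1c have "(u' \<noteq> [] \<and> hd u' = c2 \<and> w2 \<in> shuffles (tl u') (a#u')) \<or> (a = c2 \<and> w2 \<in> shuffles u' u')"
      by (simp add: Cons_in_shuffles_iff)
    then show ?thesis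
    proof
      assume "u' \<noteq> [] \<and> hd u' = c2 \<and> w2 \<in> shuffles (tl u') (a#u')"
      then have "subseq (a#u') w2" using shuffles_subseq2 by blast
      then show ?thesis by (meson list_emb_Cons subseq_Cons')
    next
      assume "a = c2 \<and> w2 \<in> shuffles u' u'"
      then show ?thesis using shuffles_subseq2 by blast
    qed
  qed
  then obtain v2 where v2: "w2 \<in> shuffles u' v2" using subseq_shuffles by blast
  have "w \<in> shuffles (a#u') (c2#v2)" using v2 wc w1c ca
    by (simp add: Cons_in_shuffles_leftI Cons_in_shuffles_rightI)
  then have "c2 # v2 = a # u'" using Cons.prems by blast
  then have c2a: "c2 = a" and v2u: "v2 = u'" by auto
  have "\<forall>v. w2 \<in> shuffles u' v \<longleftrightarrow> v = u'"
  proof (intro allI iffI)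
    fix v assume "w2 \<in> shuffles u' v"
    then have "w \<in> shuffles (a#u') (a#v)" using wc w1c ca c2a
      by (simp add: Cons_in_shuffles_leftI Cons_in_shuffles_rightI)
    then show "v = u'" using Cons.prems by blast
  next
    fix v assume "v = u'" then show "w2 \<in> shuffles u' v" using v2 v2u by simp
  qed
  then have "w2 = perfect_shuffle u' u'" using Cons.IH by blast
  then show ?case using wc w1c ca c2a by (simp add: ps_Cons)
qed



lemma shuffleI:
  assumes "length w = length u + length v" "embedding u w e" "embedding v w f"
    "e ` {..<length u} \<inter> f ` {..<length v} = {}"
    "e ` {..<length u} \<union> f ` {..<length v} = {..<length w}"
  shows "w \<in> shuffle u v"
  unfolding shuffle_def mem_Collect_eq using assms by metis

lemma shuffle_sym: "w \<in> shuffle u v \<Longrightarrow> w \<in> shuffle v u"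
proof -
  assume "w \<in> shuffle u v"
  then obtain e f where "length w = length u + length v" "embedding u w e" "embedding v w f"
    "e ` {..<length u} \<inter> f ` {..<length v} = {}"
    "e ` {..<length u} \<union> f ` {..<length v} = {..<length w}"
    unfolding shuffle_def by blast
  moreover have "f ` {..<length v} \<inter> e ` {..<length u} = {}"
    using calculation(4) by (simp add: Int_commute)
  moreover have "f ` {..<length v} \<union> e ` {..<length u} = {..<length w}"
    using calculation(5) by (simp add: Un_commute)
  ultimately have "length w = length v + length u \<and> (\<exists>e' f'. embedding v w e' \<and> embedding u w f' \<and>
            e' ` {..<length v} \<inter> f' ` {..<length u} = {} \<and>
            e' ` {..<length v} \<union> f' ` {..<length u} = {..<length w})" by auto
  then show ?thesis unfolding shuffle_def by blast
qed

lemma emb_mono: "embedding u w e \<Longrightarrow> i < j \<Longrightarrow> j < length u \<Longrightarrow> e i < e j"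
  unfolding embedding_def by blast

lemma emb_nth: "embedding u w e \<Longrightarrow> i < length u \<Longrightarrow> e i < length w \<and> u ! i = w ! e i"
  unfolding embedding_def by blast

lemma emb_le: "embedding u w e \<Longrightarrow> i \<le> j \<Longrightarrow> j < length u \<Longrightarrow> e i \<le> e j"
  by (metis emb_mono le_eq_less_or_eq)

lemma emb_less_iff: "embedding u w e \<Longrightarrow> i < length u \<Longrightarrow> j < length u \<Longrightarrow> e i < e j \<longleftrightarrow> i < j"
  by (metis emb_mono linorder_neqE_nat not_less_iff_gr_or_eq)

lemma emb_inj: "embedding u w e \<Longrightarrow> inj_on e {..<length u}"
  unfolding inj_on_def by (metis emb_mono lessThan_iff linorder_neqE_nat less_irrefl)

lemma sh_tail_left:
  assumes len: "length (c # w') = length u + length v"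
    and e: "embedding u (c#w') e" and f: "embedding v (c#w') f"
    and dis: "e ` {..<length u} \<inter> f ` {..<length v} = {}"
    and cov: "e ` {..<length u} \<union> f ` {..<length v} = {..<length (c#w')}"
    and e0: "e 0 = 0" and un: "u \<noteq> []"
  shows "\<exists>u'. u = c # u' \<and> w' \<in> shuffle u' v"
proof -
  obtain a u' where u: "u = a # u'" using un by (cases u) auto
  have ac: "a = c" using emb_nth[OF e, of 0] e0 u by auto
  have epos: "e (Suc i) > 0" if "i < length u'" for i
    using emb_mono[OF e, of 0 "Suc i"] e0 u that by simp
  have fpos: "f j > 0" if "j < length v" for j
  proof (rule ccontr)
    assume "\<not> f j > 0"
    then have "f j = 0" by simp
    then have "0 \<in> e ` {..<length u} \<inter> f ` {..<length v}" using that e0 u by force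
    then show False using dis by blast
  qed
  define e' where "e' = (\<lambda>i. e (Suc i) - 1)"
  define f' where "f' = (\<lambda>j. f j - 1)"
  have e': "embedding u' w' e'"
    unfolding embedding_def
  proof (intro conjI allI impI)
    fix i assume i: "i < length u'"
    have "e (Suc i) < length (c # w')" "u ! Suc i = (c#w') ! e (Suc i)"
      using emb_nth[OF e, of "Suc i"] i u by auto
    moreover have p: "e (Suc i) > 0" using epos[OF i] .
    moreover have "(c#w') ! e (Suc i) = w' ! (e (Suc i) - 1)" using p by (cases "e (Suc i)") auto
    ultimately show "e' i < length w'" "u' ! i = w' ! e' i"
      using u unfolding e'_def by simp_all
  next
    fix i j assume ij: "i < j \<and> j < length u'"
    then have "e (Suc i) < e (Suc j)" using emb_mono[OF e, of "Suc i" "Suc j"] u by simp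
    moreover have "e (Suc i) > 0" using epos ij by simp
    ultimately show "e' i < e' j" unfolding e'_def by linarith
  qed
  have f': "embedding v w' f'"
    unfolding embedding_def
  proof (intro conjI allI impI)
    fix j assume j: "j < length v"
    have "f j < length (c # w')" "v ! j = (c#w') ! f j"
      using emb_nth[OF f j] by auto
    moreover have p: "f j > 0" using fpos[OF j] .
    moreover have "(c#w') ! f j = w' ! (f j - 1)" using p by (cases "f j") auto
    ultimately show "f' j < length w'" "v ! j = w' ! f' j"
      unfolding f'_def by simp_all
  next
    fix i j assume ij: "i < j \<and> j < length v"
    then have "f i < f j" using emb_mono[OF f, of i j] by simp
    moreover have "f i > 0" using fpos ij by simp
    ultimately show "f' i < f' j" unfolding f'_def by linarith
  qed
  have dis': "e' ` {..<length u'} \<inter> f' ` {..<length v} = {}"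
  proof (rule ccontr)
    assume "\<not> ?thesis"
    then obtain i j where ij: "i < length u'" "j < length v" "e' i = f' j" by blast
    then have "e (Suc i) = f j" using epos fpos unfolding e'_def f'_def by fastforce
    moreover have "e (Suc i) \<in> e ` {..<length u}" using ij u by simp
    moreover have "f j \<in> f ` {..<length v}" using ij by simp
    ultimately show False using dis by (metis IntI empty_iff)
  qed
  have cov': "e' ` {..<length u'} \<union> f' ` {..<length v} = {..<length w'}"
  proof
    show "e' ` {..<length u'} \<union> f' ` {..<length v} \<subseteq> {..<length w'}"
    proof -
      have "\<forall>i<length u'. e' i < length w'" using emb_nth[OF e'] by blast
      moreover have "\<forall>j<length v. f' j < length w'" using emb_nth[OF f'] by blast
      ultimately show ?thesis by auto
    qed
  next
    show "{..<length w'} \<subseteq> e' ` {..<length u'} \<union> f' ` {..<length v}"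
    proof
      fix p assume "p \<in> {..<length w'}"
      then have "Suc p \<in> {..<length (c#w')}" by simp
      then have "Suc p \<in> e ` {..<length u} \<union> f ` {..<length v}" unfolding cov .
      then show "p \<in> e' ` {..<length u'} \<union> f' ` {..<length v}"
      proof
        assume "Suc p \<in> e ` {..<length u}"
        then obtain i where i: "i < length u" "e i = Suc p" by (auto simp only: image_iff lessThan_iff)
        then obtain i' where "i = Suc i'" using e0 by (cases i) auto
        then have "e' i' = p" "i' < length u'" using i u unfolding e'_def by auto
        then have "p \<in> e' ` {..<length u'}" by (simp add: image_iff) (metis lessThan_iff)
        then show ?thesis by (rule UnI1)
      next
        assume "Suc p \<in> f ` {..<length v}"
        then obtain j where j: "j < length v" "f j = Suc p" by (auto simp only: image_iff lessThan_iff)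
        then have "f' j = p" unfolding f'_def by simp
        then have "p \<in> f' ` {..<length v}" using j by (simp add: image_iff) (metis lessThan_iff)
        then show ?thesis by (rule UnI2)
      qed
    qed
  qed
  have lw: "length w' = length u' + length v" using len u by simp
  have "w' \<in> shuffle u' v" by (rule shuffleI[OF lw e' f' dis' cov'])
  moreover have "u = c # u'" using u ac by simp
  ultimately have conj: "u = c # u' \<and> w' \<in> shuffle u' v" by (rule conjI[rotated])
  show ?thesis by (rule exI[where x = u'], rule conj)
qed

lemma shuffleE:
  assumes "w \<in> shuffle u v"
  obtains e f where "length w = length u + length v" "embedding u w e" "embedding v w f"
    "e ` {..<length u} \<inter> f ` {..<length v} = {}"
    "e ` {..<length u} \<union> f ` {..<length v} = {..<length w}"
  using assms unfolding shuffle_def mem_Collect_eq by metis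

lemma sh_tail_key:
  assumes len: "length (c # w') = length u + length v"
    and e: "embedding u (c#w') e" and f: "embedding v (c#w') f"
    and dis: "e ` {..<length u} \<inter> f ` {..<length v} = {}"
    and cov: "e ` {..<length u} \<union> f ` {..<length v} = {..<length (c#w')}"
    and z: "0 \<in> e ` {..<length u}"
  shows "\<exists>u'. u = c # u' \<and> w' \<in> shuffle u' v"
proof -
  obtain i where i: "i < length u" "e i = 0" using z by (auto simp only: image_iff lessThan_iff)
  have "i = 0"
  proof (rule ccontr)
    assume "i \<noteq> 0"
    then have "e 0 < e i" using emb_mono[OF e, of 0 i] i by simp
    then show False using i by simp
  qed
  then have "e 0 = 0" "u \<noteq> []" using i by auto
  then show ?thesis by (rule sh_tail_left[OF len e f dis cov])
qed

lemma sh_tail: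
  assumes sh: "c # w' \<in> shuffle u v"
  shows "(\<exists>u'. u = c # u' \<and> w' \<in> shuffle u' v) \<or> (\<exists>v'. v = c # v' \<and> w' \<in> shuffle u v')"
proof -
  obtain e f where len: "length (c#w') = length u + length v" and ef: "embedding u (c#w') e" "embedding v (c#w') f"
       "e ` {..<length u} \<inter> f ` {..<length v} = {}"
       "e ` {..<length u} \<union> f ` {..<length v} = {..<length (c#w')}"
    using shuffleE[OF sh] by blast
  have "(0::nat) \<in> {..<length (c#w')}" by simp
  then have "0 \<in> e ` {..<length u} \<union> f ` {..<length v}" unfolding ef(4) .
  then show ?thesis
  proof (rule UnE)
    assume "0 \<in> e ` {..<length u}"
    then have "\<exists>u'. u = c # u' \<and> w' \<in> shuffle u' v" by (rule sh_tail_key[OF len ef])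
    then show ?thesis by (rule disjI1)
  next
    assume h0: "0 \<in> f ` {..<length v}"
    have len': "length (c#w') = length v + length u" using len by simp
    have ef': "f ` {..<length v} \<inter> e ` {..<length u} = {}"
       "f ` {..<length v} \<union> e ` {..<length u} = {..<length (c#w')}"
      using ef(3,4) by (simp_all add: Int_commute Un_commute)
    have "\<exists>v'. v = c # v' \<and> w' \<in> shuffle v' u" by (rule sh_tail_key[OF len' ef(2) ef(1) ef' h0])
    then obtain v' where "v = c # v'" "w' \<in> shuffle v' u" by (elim exE conjE)
    then have "v = c # v' \<and> w' \<in> shuffle u v'" using shuffle_sym by simp
    then have "\<exists>v'. v = c # v' \<and> w' \<in> shuffle u v'" by (rule exI[where x=v'])
    then show ?thesis by (rule disjI2)
  qed
qed

lemma sh_cons_left: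
  assumes "w' \<in> shuffle u' v"
  shows "c # w' \<in> shuffle (c # u') v"
proof -
  from assms obtain e f where len: "length w' = length u' + length v" and
    ef: "embedding u' w' e" "embedding v w' f"
       "e ` {..<length u'} \<inter> f ` {..<length v} = {}"
       "e ` {..<length u'} \<union> f ` {..<length v} = {..<length w'}"
    unfolding shuffle_def by blast
  define E where "E = (\<lambda>i. if i = 0 then 0 else Suc (e (i - 1)))"
  define F where "F = (\<lambda>j. Suc (f j))"
  have E: "embedding (c # u') (c # w') E"
    unfolding embedding_def
  proof (intro conjI allI impI)
    fix i assume i: "i < length (c # u')"
    show "E i < length (c # w')" "(c # u') ! i = (c # w') ! E i"
    proof -
      have "E i < length (c # w') \<and> (c # u') ! i = (c # w') ! E i"
      proof (cases i)
        case 0 then show ?thesis by (simp add: E_def)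
      next
        case (Suc k)
        then have "k < length u'" using i by simp
        then show ?thesis using ef(1) Suc unfolding embedding_def E_def by auto
      qed
      then show "E i < length (c # w')" "(c # u') ! i = (c # w') ! E i" by auto
    qed
  next
    fix i j assume ij: "i < j \<and> j < length (c # u')"
    then obtain k where k: "j = Suc k" by (cases j) auto
    show "E i < E j"
    proof (cases i)
      case 0 then show ?thesis using k by (simp add: E_def)
    next
      case (Suc l) then show ?thesis using ij k ef(1) unfolding embedding_def E_def by auto
    qed
  qed
  have F: "embedding v (c # w') F"
    using ef(2) unfolding embedding_def F_def by auto
  have imE: "E ` {..<length (c # u')} = insert 0 (Suc ` e ` {..<length u'})"
  proof (rule set_eqI, rule iffI)
    fix x assume "x \<in> E ` {..<length (c # u')}"
    then obtain i where i: "i < Suc (length u')" "x = E i" by auto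
    then show "x \<in> insert 0 (Suc ` e ` {..<length u'})"
      by (cases i) (auto simp: E_def)
  next
    fix x assume "x \<in> insert 0 (Suc ` e ` {..<length u'})"
    then show "x \<in> E ` {..<length (c # u')}"
    proof
      assume "x = 0" then show ?thesis by (force simp: E_def)
    next
      assume "x \<in> Suc ` e ` {..<length u'}"
      then obtain k where "k < length u'" "x = Suc (e k)" by auto
      then have "x = E (Suc k)" "Suc k < length (c # u')" by (auto simp: E_def)
      then show ?thesis by blast
    qed
  qed
  have imF: "F ` {..<length v} = Suc ` f ` {..<length v}" unfolding F_def by auto
  have dis: "E ` {..<length (c # u')} \<inter> F ` {..<length v} = {}"
    using ef(3) unfolding imE imF by auto
  have cov: "E ` {..<length (c # u')} \<union> F ` {..<length v} = {..<length (c # w')}"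
  proof -
    have "{..<length (c # w')} = insert 0 (Suc ` {..<length w'})"
      by (auto simp: image_iff) (metis less_Suc_eq_0_disj lessThan_iff)
    also have "\<dots> = insert 0 (Suc ` (e ` {..<length u'} \<union> f ` {..<length v}))" using ef(4) by simp
    finally show ?thesis unfolding imE imF by auto
  qed
  show ?thesis by (rule shuffleI[OF _ E F dis cov]) (simp add: len)
qed

lemma sh_cons_right: "w' \<in> shuffle u v' \<Longrightarrow> c # w' \<in> shuffle u (c # v')"
  using sh_cons_left shuffle_sym by metis

lemma shuffle_eq: "w \<in> shuffle u v \<longleftrightarrow> w \<in> shuffles u v"
proof
  show "w \<in> shuffle u v \<Longrightarrow> w \<in> shuffles u v"
  proof (induction w arbitrary: u v)
    case Nil
    then have "u = []" "v = []" unfolding shuffle_def by auto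
    then show ?case by simp
  next
    case (Cons c w)
    from sh_tail[OF Cons.prems] show ?case
      using Cons.IH by (auto intro: Cons_in_shuffles_leftI Cons_in_shuffles_rightI)
  qed
next
  show "w \<in> shuffles u v \<Longrightarrow> w \<in> shuffle u v"
  proof (induction w arbitrary: u v)
    case Nil
    then have "u = []" "v = []" by auto
    then show ?case unfolding shuffle_def embedding_def by auto
  next
    case (Cons c w)
    from Cons.prems have "(u \<noteq> [] \<and> hd u = c \<and> w \<in> shuffles (tl u) v) \<or> (v \<noteq> [] \<and> hd v = c \<and> w \<in> shuffles u (tl v))"
      by (simp add: Cons_in_shuffles_iff)
    then show ?case
    proof
      assume h: "u \<noteq> [] \<and> hd u = c \<and> w \<in> shuffles (tl u) v"
      have "w \<in> shuffle (tl u) v" using h by (intro Cons.IH) simp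
      then have "c # w \<in> shuffle (c # tl u) v" by (rule sh_cons_left)
      moreover have "c # tl u = u" using h by (metis list.collapse)
      ultimately show ?thesis by simp
    next
      assume h: "v \<noteq> [] \<and> hd v = c \<and> w \<in> shuffles u (tl v)"
      have "w \<in> shuffle u (tl v)" using h by (intro Cons.IH) simp
      then have "c # w \<in> shuffle u (c # tl v)" by (rule sh_cons_right)
      moreover have "c # tl v = v" using h by (metis list.collapse)
      ultimately show ?thesis by simp
    qed
  qed
qed




lemma ps_length: "length (perfect_shuffle u u) = 2 * length u"
  by (induction u) (simp_all add: perfect_shuffle_def)

lemma ps_nth: "p < 2 * length u \<Longrightarrow> perfect_shuffle u u ! p = u ! (p div 2)"
proof (induction u arbitrary: p)
  case Nil then show ?case by simp
next
  case (Cons a u)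
  show ?case
  proof (cases p)
    case 0 then show ?thesis by (simp add: ps_Cons)
  next
    case (Suc p1)
    show ?thesis
    proof (cases p1)
      case 0 then show ?thesis using Suc by (simp add: ps_Cons)
    next
      case (Suc q)
      then have "q < 2 * length u" using Cons.prems \<open>p = Suc p1\<close> by simp
      then show ?thesis using Cons.IH[of q] Suc \<open>p = Suc p1\<close> by (simp add: ps_Cons)
    qed
  qed
qed

lemma chain_up:
  fixes g :: "nat \<Rightarrow> nat"
  assumes mono: "\<And>i j. i \<le> j \<Longrightarrow> j < length u \<Longrightarrow> g i \<le> g j"
    and gm: "\<And>i. i < length u \<Longrightarrow> g i < length u"
    and gu: "\<And>i. i < length u \<Longrightarrow> u ! i = u ! g i"
  shows "length u - i = n \<Longrightarrow> i < length u \<Longrightarrow> i < g i \<Longrightarrow> i \<le> l \<Longrightarrow> l \<le> g i \<Longrightarrow> u ! l = u ! i"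
proof (induction n arbitrary: i l rule: less_induct)
  case (less n)
  show ?case
  proof (cases "g i = Suc i")
    case True
    then have "l = i \<or> l = Suc i" using less.prems by linarith
    then show ?thesis using gu[OF less.prems(2)] True by auto
  next
    case False
    then have si: "Suc i < g i" using less.prems by linarith
    then have sm: "Suc i < length u" using gm[OF less.prems(2)] by linarith
    have gs: "g i \<le> g (Suc i)" using mono[of i "Suc i"] sm by simp
    then have "Suc i < g (Suc i)" using si by linarith
    note lt = this
    have IH: "u ! l' = u ! Suc i" if "Suc i \<le> l'" "l' \<le> g (Suc i)" for l'
    proof -
      have "length u - Suc i < n" using less.prems(1,2) by linarith
      then show ?thesis using less.IH[of "length u - Suc i" "Suc i" l'] sm lt that by blast
    qed
    have "u ! g i = u ! Suc i" using si gs by (intro IH) simp_all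
    then have eq: "u ! Suc i = u ! i" using gu[OF less.prems(2)] by simp
    show ?thesis
    proof (cases "l = i")
      case True then show ?thesis by simp
    next
      case False
      then have "Suc i \<le> l" "l \<le> g (Suc i)" using less.prems gs by auto
      then have "u ! l = u ! Suc i" by (rule IH)
      then show ?thesis using eq by simp
    qed
  qed
qed

lemma chain_down:
  fixes g :: "nat \<Rightarrow> nat"
  assumes mono: "\<And>i j. i \<le> j \<Longrightarrow> j < length u \<Longrightarrow> g i \<le> g j"
    and gu: "\<And>i. i < length u \<Longrightarrow> u ! i = u ! g i"
  shows "i < length u \<Longrightarrow> g i < i \<Longrightarrow> g i \<le> l \<Longrightarrow> l \<le> i \<Longrightarrow> u ! l = u ! i"
proof (induction i arbitrary: l rule: less_induct)
  case (less i)
  show ?case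
  proof (cases "g i = i - 1")
    case True
    then have "l = i \<or> l = i - 1" using less.prems by linarith
    then show ?thesis using gu[OF less.prems(1)] True by auto
  next
    case False
    then have si: "g i < i - 1" using less.prems by linarith
    have im: "i - 1 < length u" "i - 1 < i" using less.prems by auto
    have gs: "g (i - 1) \<le> g i" using mono[of "i - 1" i] less.prems by simp
    then have "g (i - 1) < i - 1" using si by linarith
    then have IH: "\<And>l'. g (i - 1) \<le> l' \<Longrightarrow> l' \<le> i - 1 \<Longrightarrow> u ! l' = u ! (i - 1)"
      using less.IH[OF im(2) im(1)] by blast
    have "u ! g i = u ! (i - 1)" using si gs by (intro IH) simp_all
    then have eq: "u ! (i - 1) = u ! i" using gu[OF less.prems(1)] by simp
    show ?thesis
    proof (cases "l = i")
      case True then show ?thesis by simp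
    next
      case False
      then have "g (i - 1) \<le> l" "l \<le> i - 1" using less.prems gs by auto
      then have "u ! l = u ! (i - 1)" by (rule IH)
      then show ?thesis using eq by simp
    qed
  qed
qed

lemma uniq:
  assumes sh: "perfect_shuffle u u \<in> shuffle u v"
  shows "v = u"
proof -
  define m where "m = length u"
  define w where "w = perfect_shuffle u u"
  obtain e f where len: "length w = length u + length v" and e: "embedding u w e"
    and f: "embedding v w f"
    and dis: "e ` {..<length u} \<inter> f ` {..<length v} = {}"
    and cov: "e ` {..<length u} \<union> f ` {..<length v} = {..<length w}"
    using shuffleE[OF sh] unfolding w_def by blast
  have lw: "length w = 2 * m" unfolding w_def m_def by (rule ps_length)
  have lv: "length v = m" using len lw m_def by simp
  define g where "g = (\<lambda>i. e i div 2)"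
  have eb: "e i < 2 * m" if "i < m" for i using emb_nth[OF e, of i] that lw m_def by simp
  have fb: "f j < 2 * m" if "j < m" for j using emb_nth[OF f, of j] that lw lv by simp
  have gu: "u ! i = u ! g i" if "i < length u" for i
  proof -
    have "u ! i = w ! e i" using emb_nth[OF e that] by simp
    also have "\<dots> = u ! (e i div 2)" unfolding w_def by (rule ps_nth) (use eb that m_def in simp)
    finally show ?thesis unfolding g_def .
  qed
  have fv: "v ! j = u ! (f j div 2)" if "j < m" for j
  proof -
    have "v ! j = w ! f j" using emb_nth[OF f, of j] that lv by simp
    also have "\<dots> = u ! (f j div 2)" unfolding w_def by (rule ps_nth) (use fb that m_def in simp)
    finally show ?thesis .
  qed
  have gmono: "g i \<le> g j" if "i \<le> j" "j < length u" for i j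
    using emb_le[OF e that] unfolding g_def by (simp add: div_le_mono)
  have gm: "g i < length u" if "i < length u" for i
    using eb[of i] that unfolding g_def m_def by simp
  have adj_up: "u ! Suc l = u ! l" if "l < m" "l < g l" for l
    using chain_up[of u g, OF gmono gm gu, of l "length u - l" "Suc l"] that m_def by simp
  have adj_down: "u ! (l - 1) = u ! l" if "l < m" "g l < l" for l
    using chain_down[of u g, OF gmono gu, of l "l - 1"] that m_def by simp
  have einj: "inj_on e {..<length u}" by (rule emb_inj[OF e])
  have finj: "inj_on f {..<length v}" by (rule emb_inj[OF f])
  have main: "u ! (f j div 2) = u ! j" if j: "j < m" for j
  proof -
    define b where "b = f j div 2"
    have bm: "b < m" using fb[OF j] unfolding b_def by simp
    consider "b = j" | "b < j" | "j < b" by linarith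
    then show ?thesis
    proof cases
      case 1 then show ?thesis unfolding b_def by simp
    next
      case 2
      have lead: "l < g l" if l: "b \<le> l" "l < j" for l
      proof (rule ccontr)
        assume "\<not> l < g l"
        then have el: "e l < 2 * l + 2" unfolding g_def by linarith
        let ?A = "e ` {..<Suc l}" and ?B = "f ` {..<Suc j}"
        have lm: "Suc l \<le> length u" "Suc j \<le> length v" using l j m_def lv by auto
        have cA: "card ?A = Suc l"
          using card_image[OF inj_on_subset[OF einj]] lm by auto
        have cB: "card ?B = Suc j"
          using card_image[OF inj_on_subset[OF finj]] lm by auto
        have AB: "?A \<inter> ?B = {}"
        proof -
          have "?A \<subseteq> e ` {..<length u}" "?B \<subseteq> f ` {..<length v}" using lm by auto
          then show ?thesis using dis by blast
        qed
        have sub: "?A \<union> ?B \<subseteq> {..<2 * l + 2}"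
        proof
          fix x assume "x \<in> ?A \<union> ?B"
          then show "x \<in> {..<2 * l + 2}"
          proof
            assume "x \<in> ?A"
            then obtain i where i: "i < Suc l" "x = e i" by auto
            have "e i \<le> e l" using emb_le[OF e, of i l] i lm by simp
            then show ?thesis using i el by simp
          next
            assume "x \<in> ?B"
            then obtain k where k: "k < Suc j" "x = f k" by auto
            have "f k \<le> f j" using emb_le[OF f, of k j] k lm by simp
            moreover have "f j < 2 * b + 2" unfolding b_def by linarith
            ultimately show ?thesis using k l by simp
          qed
        qed
        have "card (?A \<union> ?B) = Suc l + Suc j"
          using card_Un_disjoint[OF _ _ AB] cA cB by simp
        moreover have "card (?A \<union> ?B) \<le> 2 * l + 2"
          using card_mono[OF _ sub] by simp
        ultimately show False using l by simp
      qed
      have ch: "u ! (b + d) = u ! b" if "b + d \<le> j" for d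
        using that
      proof (induction d)
        case 0 then show ?case by simp
      next
        case (Suc d)
        then have "b + d < j" by simp
        then have "u ! Suc (b + d) = u ! (b + d)" using lead[of "b + d"] j by (intro adj_up) simp_all
        then show ?case using Suc by simp
      qed
      have "u ! j = u ! b" using ch[of "j - b"] 2 by simp
      then show ?thesis unfolding b_def by simp
    next
      case 3
      have lag: "g l < l" if l: "j < l" "l \<le> b" for l
      proof (rule ccontr)
        assume "\<not> g l < l"
        then have el: "2 * l \<le> e l" unfolding g_def by linarith
        have lm: "l < length u" "j < length v" using l bm m_def lv j by auto
        have fj: "2 * b \<le> f j" unfolding b_def by linarith
        have sub: "{..<2 * l} \<subseteq> e ` {..<l} \<union> f ` {..<j}"
        proof
          fix p assume p: "p \<in> {..<2 * l}"
          then have "p \<in> {..<length w}" using lm lw m_def by simp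
          then have "p \<in> e ` {..<length u} \<union> f ` {..<length v}" unfolding cov .
          then show "p \<in> e ` {..<l} \<union> f ` {..<j}"
          proof
            assume "p \<in> e ` {..<length u}"
            then obtain i where i: "i < length u" "p = e i" by auto
            have "i < l"
            proof (rule ccontr)
              assume "\<not> i < l"
              then have "e l \<le> e i" using emb_le[OF e, of l i] i by simp
              then show False using el i p by simp
            qed
            then show ?thesis using i by blast
          next
            assume "p \<in> f ` {..<length v}"
            then obtain k where k: "k < length v" "p = f k" by auto
            have "k < j"
            proof (rule ccontr)
              assume "\<not> k < j"
              then have "f j \<le> f k" using emb_le[OF f, of j k] k by simp
              then show False using fj l k p by simp
            qed
            then show ?thesis using k by blast
          qed
        qed
        have "2 * l \<le> card (e ` {..<l} \<union> f ` {..<j})"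
          using card_mono[OF _ sub] by simp
        also have "\<dots> \<le> card (e ` {..<l}) + card (f ` {..<j})" by (rule card_Un_le)
        also have "\<dots> \<le> l + j" using card_image_le[of "{..<l}" e] card_image_le[of "{..<j}" f] by simp
        finally show False using l by simp
      qed
      have ch: "u ! (j + d) = u ! j" if "j + d \<le> b" for d
        using that
      proof (induction d)
        case 0 then show ?case by simp
      next
        case (Suc d)
        then have "j + Suc d \<le> b" by simp
        then have "u ! (j + Suc d - 1) = u ! (j + Suc d)" using lag[of "j + Suc d"] bm by (intro adj_down) simp_all
        then show ?case using Suc by simp
      qed
      have "u ! b = u ! j" using ch[of "b - j"] 3 by simp
      then show ?thesis unfolding b_def by simp
    qed
  qed
  show ?thesis
  proof (rule nth_equalityI)
    show "length v = length u" using lv m_def by simp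
  next
    fix j assume "j < length v"
    then have j: "j < m" using lv by simp
    show "v ! j = u ! j" using fv[OF j] main[OF j] by simp
  qed
qed


lemma compl_set_eq: "compl_set w u = {v. w \<in> shuffles u v}"
  unfolding compl_set_def shuffle_eq using length_shuffles by fastforce

theorem theorem36:
  fixes w u :: "'a list"
  assumes "scattered_factor u w"
  shows "compl_set w u = {u} \<longleftrightarrow> w = perfect_shuffle u u"
proof
  assume h: "compl_set w u = {u}"
  have "\<forall>v. w \<in> shuffles u v \<longleftrightarrow> v = u"
  proof
    fix v
    have "v \<in> compl_set w u \<longleftrightarrow> v = u" using h by simp
    then show "w \<in> shuffles u v \<longleftrightarrow> v = u" unfolding compl_set_eq by simp
  qed
  then show "w = perfect_shuffle u u" by (rule fwd)
next
  assume h: "w = perfect_shuffle u u"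
  show "compl_set w u = {u}"
  proof (rule set_eqI)
    fix v
    have "w \<in> shuffles u v \<longleftrightarrow> v = u"
    proof
      assume "w \<in> shuffles u v"
      then have "perfect_shuffle u u \<in> shuffle u v" using h by (simp add: shuffle_eq)
      then show "v = u" by (rule uniq)
    next
      assume "v = u"
      then show "w \<in> shuffles u v" using h ps_in_shuffles by simp
    qed
    then show "v \<in> compl_set w u \<longleftrightarrow> v \<in> {u}" unfolding compl_set_eq by simp
  qed
qed

end
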